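(* Suppose $X=\bigsqcup_n X_n$ is a weak expander. Then there exist $R>0$ and $\kappa>0$ such that for every $S>0$ there exists $N$ such that for every $n\ge N$ and every $\xi\in\ell^2(X_n)$ with $\|\xi\|=1$ and support contained in a ball of radius $S$, one has $\langle\Delta_R\xi,\xi\rangle\ge\kappa$.
   Context: Let $(X_n)$ be a sequence of non-empty finite metric spaces and $X=\bigsqcup_n X_n$ their disjoint union, equipped with a metric restricting to the given metric on each $X_n$ and such that $d(X_n,X_m)>\operatorname{diam}(X_n)+\operatorname{diam}(X_m)$ for $n\neq m$; assume $X$ has bounded geometry (for each $R>0$ there is a uniform bound on the number of points in balls of radius $R$). For $R>0$ let $E_n^R=\{(x,y)\in X_n\times X_n: d(x,y)\le R\}$. $X$ is a weak expander if there exist $c,R>0$ such that for every $S>0$ there exists $N$ such that for all $n\ge N$ and all $\phi:X_n\to\mathbb{R}$ supported in a ball of radius $S$, $\sum_{(x,y)\in E_n^R}|\phi(x)-\phi(y)|\ge c\sum_{x\in X_n}|\phi(x)|$. The Laplacian at scale $R$ is the bounded operator $\Delta_R$ on $\ell^2(X)$ given on the standard basis by $\Delta_R\delta_x=\sum_{y:\,d(x,y)\le R}(\delta_x-\delta_y)$; it satisfies $\langle\Delta_R\xi,\xi\rangle=\tfrac12\sum_{d(x,y)\le R}|\xi(x)-\xi(y)|^2$. Here $\ell^2(X_n)$ is regarded as a subspace of $\ell^2(X)$. *)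

theory Defs
  imports "HOL-Analysis.Analysis"
begin

text \<open>The space X is the union of the pieces Xs n, sitting inside a metric space type 'a.
  Functions on X (resp. on X_n) are represented as functions 'a => real; only their values
  on X (resp. X_n) matter.\<close>

definition coarse_disjoint_union :: "(nat \<Rightarrow> 'a::metric_space set) \<Rightarrow> bool" where
  "coarse_disjoint_union Xs \<longleftrightarrow>
     (\<forall>n. finite (Xs n) \<and> Xs n \<noteq> {}) \<and>
     (\<forall>n m. n \<noteq> m \<longrightarrow> Xs n \<inter> Xs m = {}) \<and>
     (\<forall>n m. n \<noteq> m \<longrightarrow> setdist (Xs n) (Xs m) > diameter (Xs n) + diameter (Xs m))"

definition bounded_geometry :: "'a::metric_space set \<Rightarrow> bool" where
  "bounded_geometry X \<longleftrightarrow>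
     (\<forall>R>0. \<exists>K::nat. \<forall>x\<in>X. finite {y\<in>X. dist x y \<le> R} \<and> card {y\<in>X. dist x y \<le> R} \<le> K)"

definition edges :: "'a::metric_space set \<Rightarrow> real \<Rightarrow> ('a \<times> 'a) set" where
  "edges A R = {(x,y) \<in> A \<times> A. dist x y \<le> R}"

definition supp_in_ball :: "'a::metric_space set \<Rightarrow> ('a \<Rightarrow> real) \<Rightarrow> real \<Rightarrow> bool" where
  "supp_in_ball A \<phi> S \<longleftrightarrow> (\<exists>x0\<in>A. \<forall>x\<in>A. \<phi> x \<noteq> 0 \<longrightarrow> dist x0 x \<le> S)"

definition weak_expander :: "(nat \<Rightarrow> 'a::metric_space set) \<Rightarrow> bool" where
  "weak_expander Xs \<longleftrightarrow>
     (\<exists>c>0. \<exists>R>0. \<forall>S>0. \<exists>N. \<forall>n\<ge>N. \<forall>\<phi>::'a \<Rightarrow> real.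
        supp_in_ball (Xs n) \<phi> S \<longrightarrow>
        (\<Sum>(x,y)\<in>edges (Xs n) R. \<bar>\<phi> x - \<phi> y\<bar>) \<ge> c * (\<Sum>x\<in>Xs n. \<bar>\<phi> x\<bar>))"

text \<open>The Laplacian at scale R on X, applied to a finitely supported function xi:
  (Delta_R xi)(z) = sum over y in X with d(z,y) <= R of (xi z - xi y),
  which is the operator with Delta_R delta_x = sum_{d(x,y)<=R} (delta_x - delta_y).\<close>
definition laplacian :: "'a::metric_space set \<Rightarrow> real \<Rightarrow> ('a \<Rightarrow> real) \<Rightarrow> 'a \<Rightarrow> real" where
  "laplacian X R \<xi> z = (\<Sum>y\<in>{y\<in>X. dist z y \<le> R}. \<xi> z - \<xi> y)"

definition l2_inner :: "'a set \<Rightarrow> ('a \<Rightarrow> real) \<Rightarrow> ('a \<Rightarrow> real) \<Rightarrow> real" where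
  "l2_inner X \<xi> \<eta> = (\<Sum>x\<in>{x\<in>X. \<xi> x \<noteq> 0 \<and> \<eta> x \<noteq> 0}. \<xi> x * \<eta> x)"

definition l2_norm :: "'a set \<Rightarrow> ('a \<Rightarrow> real) \<Rightarrow> real" where
  "l2_norm X \<xi> = sqrt (\<Sum>x\<in>{x\<in>X. \<xi> x \<noteq> 0}. (\<xi> x)\<^sup>2)"

end

theory Submission
  imports Defs
begin

lemma sum_swap_edges:
  "(\<Sum>(x,y)\<in>edges A R. f x y) = (\<Sum>(x,y)\<in>edges A R. f y x)"
  by (rule sum.reindex_bij_witness[where i=prod.swap and j=prod.swap])
     (auto simp: edges_def dist_commute)

lemma edges_Sigma: "edges A R = Sigma A (\<lambda>x. {y\<in>A. dist x y \<le> R})"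
  by (auto simp: edges_def)

lemma amgm_bound:
  fixes a b t :: real
  assumes "t > 0"
  shows "\<bar>a\<^sup>2 - b\<^sup>2\<bar> \<le> (t * (a - b)\<^sup>2 + (a + b)\<^sup>2 / t) / 2"
proof -
  have e: "\<bar>a\<^sup>2 - b\<^sup>2\<bar> = \<bar>a - b\<bar> * \<bar>a + b\<bar>"
    by (simp add: power2_eq_square abs_mult[symmetric] algebra_simps)
  have "0 \<le> (t * \<bar>a - b\<bar> - \<bar>a + b\<bar>)\<^sup>2" by simp
  hence "2 * t * (\<bar>a - b\<bar> * \<bar>a + b\<bar>) \<le> t\<^sup>2 * (a - b)\<^sup>2 + (a + b)\<^sup>2"
    by (simp add: power2_eq_square algebra_simps)
  hence "\<bar>a - b\<bar> * \<bar>a + b\<bar> \<le> (t\<^sup>2 * (a - b)\<^sup>2 + (a + b)\<^sup>2) / (2 * t)"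
    using assms by (simp add: field_simps)
  also have "\<dots> = (t * (a - b)\<^sup>2 + (a + b)\<^sup>2 / t) / 2"
    using assms by (simp add: field_simps power2_eq_square)
  finally show ?thesis using e by simp
qed

theorem lemma3p2:
  fixes Xs :: "nat \<Rightarrow> 'a::metric_space set"
  defines "X \<equiv> (\<Union>n. Xs n)"
  assumes "coarse_disjoint_union Xs"
    and "bounded_geometry X"
    and "weak_expander Xs"
  shows "\<exists>R>0. \<exists>\<kappa>>0. \<forall>S>0. \<exists>N. \<forall>n\<ge>N. \<forall>\<xi>::'a \<Rightarrow> real.
           (\<forall>x. x \<notin> Xs n \<longrightarrow> \<xi> x = 0) \<longrightarrow> l2_norm X \<xi> = 1 \<longrightarrow> supp_in_ball X \<xi> S \<longrightarrow>
           l2_inner X (laplacian X R \<xi>) \<xi> \<ge> \<kappa>"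
proof -
  obtain c R where c: "c > 0" and R: "R > 0" and WE: "\<forall>S>0. \<exists>N. \<forall>n\<ge>N. \<forall>\<phi>::'a \<Rightarrow> real.
        supp_in_ball (Xs n) \<phi> S \<longrightarrow>
        (\<Sum>(x,y)\<in>edges (Xs n) R. \<bar>\<phi> x - \<phi> y\<bar>) \<ge> c * (\<Sum>x\<in>Xs n. \<bar>\<phi> x\<bar>)"
    using assms(4) unfolding weak_expander_def by blast
  obtain K :: nat where K: "\<forall>x\<in>X. finite {y\<in>X. dist x y \<le> R} \<and> card {y\<in>X. dist x y \<le> R} \<le> K"
    using assms(3) R unfolding bounded_geometry_def by blast
  define K' where "K' = real K + 1"
  have K'pos: "K' > 0" unfolding K'_def by simp
  have fin: "\<And>n. finite (Xs n)" using assms(2) unfolding coarse_disjoint_union_def by blast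
  define \<kappa> where "\<kappa> = c\<^sup>2 / (8 * K')"
  have "\<kappa> > 0" unfolding \<kappa>_def using c K'pos by simp
  moreover have "\<forall>S>0. \<exists>N. \<forall>n\<ge>N. \<forall>\<xi>::'a \<Rightarrow> real.
           (\<forall>x. x \<notin> Xs n \<longrightarrow> \<xi> x = 0) \<longrightarrow> l2_norm X \<xi> = 1 \<longrightarrow> supp_in_ball X \<xi> S \<longrightarrow>
           l2_inner X (laplacian X R \<xi>) \<xi> \<ge> \<kappa>"
  proof (intro allI impI)
    fix S :: real assume S: "S > 0"
    then obtain N where N: "\<forall>n\<ge>N. \<forall>\<phi>::'a \<Rightarrow> real.
        supp_in_ball (Xs n) \<phi> (2*S) \<longrightarrow>
        (\<Sum>(x,y)\<in>edges (Xs n) R. \<bar>\<phi> x - \<phi> y\<bar>) \<ge> c * (\<Sum>x\<in>Xs n. \<bar>\<phi> x\<bar>)"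
      using WE by (meson mult_pos_pos zero_less_numeral)
    show "\<exists>N. \<forall>n\<ge>N. \<forall>\<xi>::'a \<Rightarrow> real.
           (\<forall>x. x \<notin> Xs n \<longrightarrow> \<xi> x = 0) \<longrightarrow> l2_norm X \<xi> = 1 \<longrightarrow> supp_in_ball X \<xi> S \<longrightarrow>
           l2_inner X (laplacian X R \<xi>) \<xi> \<ge> \<kappa>"
    proof (intro exI allI impI)
      fix n \<xi> assume n: "N \<le> n" and z: "\<forall>x. x \<notin> Xs n \<longrightarrow> \<xi> x = (0::real)"
        and nm: "l2_norm X \<xi> = 1" and sb: "supp_in_ball X \<xi> S"
      define A where "A = Xs n"
      have finA: "finite A" unfolding A_def using fin by blast
      have AX: "A \<subseteq> X" unfolding A_def X_def by blast
      have zA: "\<And>x. x \<notin> A \<Longrightarrow> \<xi> x = 0" using z unfolding A_def by blast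
      have s1: "(\<Sum>x\<in>{x\<in>X. \<xi> x \<noteq> 0}. (\<xi> x)\<^sup>2) = 1"
        using nm unfolding l2_norm_def by simp
      have "(\<Sum>x\<in>{x\<in>X. \<xi> x \<noteq> 0}. (\<xi> x)\<^sup>2) = (\<Sum>x\<in>A. (\<xi> x)\<^sup>2)"
        by (rule sum.mono_neutral_left) (use finA AX zA in auto)
      hence sA: "(\<Sum>x\<in>A. (\<xi> x)\<^sup>2) = 1" using s1 by simp
      obtain x1 where x1: "x1 \<in> A" "\<xi> x1 \<noteq> 0"
      proof (rule ccontr)
        assume "\<not> thesis"
        hence "\<forall>x\<in>A. \<xi> x = 0" using that by blast
        hence "(\<Sum>x\<in>A. (\<xi> x)\<^sup>2) = 0" by simp
        thus False using sA by simp
      qed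
      obtain x0 where x0: "x0 \<in> X" "\<forall>x\<in>X. \<xi> x \<noteq> 0 \<longrightarrow> dist x0 x \<le> S"
        using sb unfolding supp_in_ball_def by blast
      have "supp_in_ball A (\<lambda>x. (\<xi> x)\<^sup>2) (2*S)"
        unfolding supp_in_ball_def
      proof (intro bexI[of _ x1] ballI impI)
        fix x assume "x \<in> A" "(\<xi> x)\<^sup>2 \<noteq> 0"
        hence "dist x0 x \<le> S" using x0 AX by auto
        moreover have "dist x0 x1 \<le> S" using x0 x1 AX by auto
        ultimately show "dist x1 x \<le> 2 * S"
          using dist_triangle[of x1 x x0] by (simp add: dist_commute)
      qed (use x1 in auto)
      hence "(\<Sum>(x,y)\<in>edges A R. \<bar>(\<xi> x)\<^sup>2 - (\<xi> y)\<^sup>2\<bar>) \<ge> c * (\<Sum>x\<in>A. \<bar>(\<xi> x)\<^sup>2\<bar>)"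
        using N n unfolding A_def by blast
      hence c1: "(\<Sum>(x,y)\<in>edges A R. \<bar>(\<xi> x)\<^sup>2 - (\<xi> y)\<^sup>2\<bar>) \<ge> c" using sA by simp
      define E where "E = edges A R"
      have finE: "finite E" unfolding E_def edges_def
        by (rule finite_subset[of _ "A \<times> A"]) (use finA in auto)
      define D where "D = (\<Sum>(x,y)\<in>E. (\<xi> x - \<xi> y)\<^sup>2)"
      define t where "t = 4 * K' / c"
      have tpos: "t > 0" unfolding t_def using K'pos c by simp
      have "(\<Sum>(x,y)\<in>E. \<bar>(\<xi> x)\<^sup>2 - (\<xi> y)\<^sup>2\<bar>) \<le>
            (\<Sum>(x,y)\<in>E. (t * (\<xi> x - \<xi> y)\<^sup>2 + (\<xi> x + \<xi> y)\<^sup>2 / t) / 2)"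
        by (rule sum_mono) (use amgm_bound[OF tpos] in auto)
      also have "\<dots> = (t * D + (\<Sum>(x,y)\<in>E. (\<xi> x + \<xi> y)\<^sup>2) / t) / 2"
        unfolding D_def
        by (simp add: sum_divide_distrib[symmetric] sum_distrib_left sum.distrib case_prod_unfold)
      finally have c2: "c \<le> (t * D + (\<Sum>(x,y)\<in>E. (\<xi> x + \<xi> y)\<^sup>2) / t) / 2"
        using c1 unfolding E_def by linarith
      define Bn where "Bn = (\<lambda>x. {y\<in>A. dist x y \<le> R})"
      have Bnsub: "\<And>x. x \<in> A \<Longrightarrow> Bn x \<subseteq> {y\<in>X. dist x y \<le> R}" unfolding Bn_def using AX by auto
      have finB: "\<And>x. x \<in> A \<Longrightarrow> finite {y\<in>X. dist x y \<le> R}" using K AX by blast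
      have cardBn: "\<And>x. x \<in> A \<Longrightarrow> real (card (Bn x)) \<le> K'"
      proof -
        fix x assume x: "x \<in> A"
        have "card (Bn x) \<le> card {y\<in>X. dist x y \<le> R}"
          by (rule card_mono[OF finB[OF x] Bnsub[OF x]])
        also have "\<dots> \<le> K" using K x AX by blast
        finally show "real (card (Bn x)) \<le> K'" unfolding K'_def by simp
      qed
      have ES: "E = Sigma A Bn" unfolding E_def Bn_def by (rule edges_Sigma)
      have sq: "(\<Sum>(x,y)\<in>E. (\<xi> x)\<^sup>2) \<le> K'"
      proof -
        have "(\<Sum>(x,y)\<in>E. (\<xi> x)\<^sup>2) = (\<Sum>x\<in>A. \<Sum>y\<in>Bn x. (\<xi> x)\<^sup>2)"
          unfolding ES
          by (rule sum.Sigma[symmetric]) (use finA in \<open>auto simp: Bn_def\<close>)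
        also have "\<dots> = (\<Sum>x\<in>A. real (card (Bn x)) * (\<xi> x)\<^sup>2)" by simp
        also have "\<dots> \<le> (\<Sum>x\<in>A. K' * (\<xi> x)\<^sup>2)"
          by (rule sum_mono) (use cardBn in \<open>auto intro: mult_right_mono\<close>)
        also have "\<dots> = K'" using sA by (simp add: sum_distrib_left[symmetric])
        finally show ?thesis .
      qed
      have "(\<Sum>(x,y)\<in>E. (\<xi> x + \<xi> y)\<^sup>2) \<le> (\<Sum>(x,y)\<in>E. 2 * (\<xi> x)\<^sup>2 + 2 * (\<xi> y)\<^sup>2)"
      proof (rule sum_mono)
        fix p assume "p \<in> E"
        obtain a b where p: "p = (a,b)" by fastforce
        have "0 \<le> (\<xi> a - \<xi> b)\<^sup>2" by simp
        thus "(case p of (x, y) \<Rightarrow> (\<xi> x + \<xi> y)\<^sup>2) \<le> (case p of (x, y) \<Rightarrow> 2 * (\<xi> x)\<^sup>2 + 2 * (\<xi> y)\<^sup>2)"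
          unfolding p by (simp add: power2_eq_square algebra_simps)
      qed
      also have "\<dots> = 2 * (\<Sum>(x,y)\<in>E. (\<xi> x)\<^sup>2) + 2 * (\<Sum>(x,y)\<in>E. (\<xi> y)\<^sup>2)"
        by (simp add: sum.distrib sum_distrib_left case_prod_unfold)
      also have "(\<Sum>(x,y)\<in>E. (\<xi> y)\<^sup>2) = (\<Sum>(x,y)\<in>E. (\<xi> x)\<^sup>2)"
        unfolding E_def by (rule sum_swap_edges)
      finally have plus: "(\<Sum>(x,y)\<in>E. (\<xi> x + \<xi> y)\<^sup>2) \<le> 4 * K'" using sq by linarith
      have "c \<le> (t * D + 4 * K' / t) / 2"
        using c2 plus tpos by (smt (verit) divide_right_mono)
      also have "4 * K' / t = c" unfolding t_def using K'pos c by simp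
      finally have "c \<le> (t * D + c) / 2" .
      hence "c \<le> t * D" by simp
      hence "c * c \<le> 4 * K' * D" unfolding t_def using c by (simp add: field_simps)
      hence Dge: "D \<ge> c\<^sup>2 / (4 * K')" using K'pos by (simp add: field_simps power2_eq_square)
      define L where "L = laplacian X R \<xi>"
      have inner: "l2_inner X L \<xi> = (\<Sum>x\<in>A. L x * \<xi> x)"
        unfolding l2_inner_def
        by (rule sum.mono_neutral_left) (use finA AX zA in auto)
      have Lx: "L x * \<xi> x \<ge> (\<Sum>y\<in>Bn x. (\<xi> x - \<xi> y) * \<xi> x)" if x: "x \<in> A" for x
      proof -
        have "L x * \<xi> x = (\<Sum>y\<in>{y\<in>X. dist x y \<le> R}. (\<xi> x - \<xi> y) * \<xi> x)"
          unfolding L_def laplacian_def by (simp add: sum_distrib_right)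
        also have "\<dots> = (\<Sum>y\<in>Bn x. (\<xi> x - \<xi> y) * \<xi> x) +
             (\<Sum>y\<in>{y\<in>X. dist x y \<le> R} - Bn x. (\<xi> x - \<xi> y) * \<xi> x)"
          using sum.subset_diff[OF Bnsub[OF x] finB[OF x], of "\<lambda>y. (\<xi> x - \<xi> y) * \<xi> x"] by (simp add: add.commute)
        finally have eq: "L x * \<xi> x = (\<Sum>y\<in>Bn x. (\<xi> x - \<xi> y) * \<xi> x) +
             (\<Sum>y\<in>{y\<in>X. dist x y \<le> R} - Bn x. (\<xi> x - \<xi> y) * \<xi> x)" .
        have "(\<Sum>y\<in>{y\<in>X. dist x y \<le> R} - Bn x. (\<xi> x - \<xi> y) * \<xi> x) \<ge> 0"
        proof (rule sum_nonneg)
          fix y assume "y \<in> {y\<in>X. dist x y \<le> R} - Bn x"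
          hence "y \<notin> A" unfolding Bn_def by auto
          thus "0 \<le> (\<xi> x - \<xi> y) * \<xi> x" using zA by (simp add: power2_eq_square[symmetric])
        qed
        thus ?thesis using eq by simp
      qed
      have "l2_inner X L \<xi> \<ge> (\<Sum>x\<in>A. \<Sum>y\<in>Bn x. (\<xi> x - \<xi> y) * \<xi> x)"
        unfolding inner by (rule sum_mono) (use Lx in auto)
      also have "(\<Sum>x\<in>A. \<Sum>y\<in>Bn x. (\<xi> x - \<xi> y) * \<xi> x) = (\<Sum>(x,y)\<in>E. (\<xi> x - \<xi> y) * \<xi> x)"
        unfolding ES
        by (rule sum.Sigma) (use finA in \<open>auto simp: Bn_def\<close>)
      finally have i1: "l2_inner X L \<xi> \<ge> (\<Sum>(x,y)\<in>E. (\<xi> x - \<xi> y) * \<xi> x)" .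
      have sw: "(\<Sum>(x,y)\<in>E. (\<xi> x - \<xi> y) * \<xi> x) = (\<Sum>(x,y)\<in>E. (\<xi> y - \<xi> x) * \<xi> y)"
        unfolding E_def by (rule sum_swap_edges)
      have "2 * (\<Sum>(x,y)\<in>E. (\<xi> x - \<xi> y) * \<xi> x) =
            (\<Sum>(x,y)\<in>E. (\<xi> x - \<xi> y) * \<xi> x) + (\<Sum>(x,y)\<in>E. (\<xi> y - \<xi> x) * \<xi> y)"
        using sw by simp
      also have "\<dots> = D" unfolding D_def
        by (simp add: sum.distrib[symmetric] case_prod_unfold power2_eq_square algebra_simps)
      finally have "l2_inner X L \<xi> \<ge> D / 2" using i1 by simp
      thus "l2_inner X (laplacian X R \<xi>) \<xi> \<ge> \<kappa>"
        unfolding L_def \<kappa>_def using Dge by simp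
    qed
  qed
  ultimately show ?thesis using R by blast
qed

end
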